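(* Let $r\ge 2$, let $\lambda,\mu\in\Lambda$ with $\lambda\sim_e\mu$, and let $s\in\mathbb{Z}$. Then $\eta(\lambda,s)\approx_r\eta(\mu,s)$ (in $\mathcal{A}_r^e$) if and only if $\Phi_r(\lambda,s)\approx_e\Phi_r(\mu,s)$ (in $\mathcal{A}_e^r$).
   Context: Fix an integer $e\ge 2$. A partition is a weakly decreasing sequence $\lambda=(\lambda_1,\lambda_2,\dots)$ of non-negative integers with finite sum $|\lambda|$; $\Lambda$ denotes the set of partitions and $\Lambda^{(m)}$ the set of $m$-multipartitions, i.e. $m$-tuples $\boldsymbol\lambda=(\lambda^{(1)},\dots,\lambda^{(m)})$ of partitions, with $|\boldsymbol\lambda|=\sum_k|\lambda^{(k)}|$. A $\beta$-set is a subset $B\subseteq\mathbb{Z}$ containing all sufficiently small integers and no sufficiently large ones. For $\lambda\in\Lambda$ and $s\in\mathbb{Z}$ set $B_s(\lambda)=\{\lambda_i-i+s : i\ge 1\}$; every $\beta$-set equals $B_s(\lambda)$ for a unique pair $(\lambda,s)$. For $N\ge 2$ let $\mathcal{A}_N=\Lambda\times\mathbb{Z}$ (abacus configurations with $N$ runners) and $\mathcal{A}_N^m=\Lambda^{(m)}\times\mathbb{Z}^m$, where $(\boldsymbol\lambda,\mathbf{s})$ is identified with the $m$-tuple of $\beta$-sets $(B_{s_1}(\lambda^{(1)}),\dots,B_{s_m}(\lambda^{(m)}))$. Blocks: for $(\boldsymbol\lambda,\mathbf{s})\in\mathcal{A}_N^m$, its $N$-residue multiset is the multiset of the values $s_k+y-x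 \bmod N$ over all nodes $(x,y,k)$ with $x\ge1$, $1\le y\le\lambda^{(k)}_x$, $1\le k\le m$. Define $(\boldsymbol\lambda,\mathbf{s})\approx_N(\boldsymbol\mu,\mathbf{s}')$ iff $\mathbf{s}=\mathbf{s}'$, $|\boldsymbol\lambda|=|\boldsymbol\mu|$ and the $N$-residue multisets coincide. Its equivalence classes are called blocks. The map $\eta$: for $(\lambda,s)\in\mathcal{A}_e$ with $B=B_s(\lambda)$ and $0\le i<e$, the set $C_i=\{(b-i)/e : b\in B,\ b\equiv i \bmod e\}$ is a $\beta$-set, so $C_i=B_{t_i}(\rho_i)$ for a unique $(\rho_i,t_i)\in\Lambda\times\mathbb{Z}$; set $\eta(\lambda,s)=((\rho_0,\dots,\rho_{e-1}),(t_0,\dots,t_{e-1}))\in\Lambda^{(e)}\times\mathbb{Z}^e$, which we also regard as an element of $\mathcal{A}_r^e$. The $e$-weight of $\lambda$ is $\mathrm{wt}(\lambda)=\sum_i|\rho_i|$. For $\lambda,\mu\in\Lambda$ write $\lambda\sim_e\mu$ if $(\lambda,s)\approx_e(\mu,s)$ for some (equivalently any) $s\in\mathbb{Z}$. Uglov's map: for $1\le k\le r$ define $\psi_k:\mathbb{Z}\to\mathbb{Z}$ by $\psi_k(ae+i)=((a+1)r-k)e+i$ for $a\in\mathbb{Z}$, $0\le i<e$. For $(\boldsymbol\lambda,\mathbf{s})\in\mathcal{A}_e^r$ the set $B=\bigsqcup_{k=1}^r\psi_k(B_{s_k}(\lambda^{(k)}))$ is a $\beta$-set, and $\Psi_r(\boldsymbol\lambda,\mathbf{s})$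 is the unique $(\tilde\lambda,\tilde s)\in\mathcal{A}_e$ with $B_{\tilde s}(\tilde\lambda)=B$. $\Psi_r:\mathcal{A}_e^r\to\mathcal{A}_e$ is a bijection; $\Phi_r=\Psi_r^{-1}$. *)

theory Defs
  imports Main "HOL-Library.Multiset"
begin

text \<open>A partition is represented as a function l :: nat => nat with l i = lambda_(i+1),
  weakly decreasing with finite support.\<close>
definition is_partition :: "(nat \<Rightarrow> nat) \<Rightarrow> bool" where
  "is_partition l \<longleftrightarrow> (\<forall>i. l (Suc i) \<le> l i) \<and> finite {i. l i \<noteq> 0}"

definition psize :: "(nat \<Rightarrow> nat) \<Rightarrow> nat" where
  "psize l = (\<Sum>i\<in>{i. l i \<noteq> 0}. l i)"

definition is_betaset :: "int set \<Rightarrow> bool" where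
  "is_betaset B \<longleftrightarrow> (\<exists>a. \<forall>x\<le>a. x \<in> B) \<and> (\<exists>b. \<forall>x\<ge>b. x \<notin> B)"

definition beta :: "int \<Rightarrow> (nat \<Rightarrow> nat) \<Rightarrow> int set" where
  "beta s l = {int (l i) - int (i + 1) + s | i. True}"

definition decode :: "int set \<Rightarrow> (nat \<Rightarrow> nat) \<times> int" where
  "decode B = (THE (l, t). is_partition l \<and> beta t l = B)"

text \<open>Abacus configurations with m runners are pairs (L, S) :: (nat => nat => nat) \<times> (nat => int);
  only components 0..<m are relevant (component k stands for the paper's component k+1).\<close>
type_synonym multiconf = "(nat \<Rightarrow> nat \<Rightarrow> nat) \<times> (nat \<Rightarrow> int)"

text \<open>Nodes (x,y) of lambda with x >= 1, 1 <= y <= lambda_x; here encoded as (i, y) with x = i+1.\<close>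
definition nodes :: "(nat \<Rightarrow> nat) \<Rightarrow> (nat \<times> nat) set" where
  "nodes l = {(i, y). 1 \<le> y \<and> y \<le> l i}"

definition residues :: "nat \<Rightarrow> nat \<Rightarrow> multiconf \<Rightarrow> int multiset" where
  "residues N m X = (\<Sum>k<m. image_mset (\<lambda>(i, y). (snd X k + int y - int (i + 1)) mod int N)
                                 (mset_set (nodes (fst X k))))"

definition block_eq :: "nat \<Rightarrow> nat \<Rightarrow> multiconf \<Rightarrow> multiconf \<Rightarrow> bool" where
  "block_eq N m X Y \<longleftrightarrow> (\<forall>k<m. snd X k = snd Y k)
      \<and> (\<Sum>k<m. psize (fst X k)) = (\<Sum>k<m. psize (fst Y k))
      \<and> residues N m X = residues N m Y"

definition sim_e :: "nat \<Rightarrow> (nat \<Rightarrow> nat) \<Rightarrow> (nat \<Rightarrow> nat) \<Rightarrow> bool" where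
  "sim_e e l m \<longleftrightarrow> (\<exists>s. block_eq e 1 (\<lambda>_. l, \<lambda>_. s) (\<lambda>_. m, \<lambda>_. s))"

definition eta_C :: "nat \<Rightarrow> int set \<Rightarrow> nat \<Rightarrow> int set" where
  "eta_C e B i = {(b - int i) div int e | b. b \<in> B \<and> b mod int e = int i}"

definition eta :: "nat \<Rightarrow> (nat \<Rightarrow> nat) \<times> int \<Rightarrow> multiconf" where
  "eta e ls = (\<lambda>i. if i < e then fst (decode (eta_C e (beta (snd ls) (fst ls)) i)) else (\<lambda>_. 0),
               \<lambda>i. if i < e then snd (decode (eta_C e (beta (snd ls) (fst ls)) i)) else 0)"

definition psi :: "nat \<Rightarrow> nat \<Rightarrow> nat \<Rightarrow> int \<Rightarrow> int" where
  "psi e r k x = ((x div int e + 1) * int r - int k) * int e + x mod int e"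

definition Psi :: "nat \<Rightarrow> nat \<Rightarrow> multiconf \<Rightarrow> (nat \<Rightarrow> nat) \<times> int" where
  "Psi e r X = decode (\<Union>k\<in>{1..r}. psi e r k ` beta (snd X (k - 1)) (fst X (k - 1)))"

definition Phi :: "nat \<Rightarrow> nat \<Rightarrow> (nat \<Rightarrow> nat) \<times> int \<Rightarrow> multiconf" where
  "Phi e r ls = (THE X. (\<forall>k<r. is_partition (fst X k))
                      \<and> (\<forall>k\<ge>r. fst X k = (\<lambda>_. 0) \<and> snd X k = 0)
                      \<and> Psi e r X = ls)"

end

theory Submission
  imports Defs
begin

definition bseq :: "int \<Rightarrow> (nat \<Rightarrow> nat) \<Rightarrow> nat \<Rightarrow> int" where
  "bseq t l i = int (l i) - int (i + 1) + t"

lemma beta_range: "beta t l = range (bseq t l)"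
  unfolding beta_def bseq_def by auto

definition Dl :: "(int \<Rightarrow> int) \<Rightarrow> int set \<Rightarrow> int set \<Rightarrow> int" where
  "Dl f A A' = (\<Sum>x\<in>A - A'. f x) - (\<Sum>x\<in>A' - A. f x)"

lemma part_mono: assumes "is_partition l" "i \<le> j" shows "l j \<le> l i"
proof -
  have "\<And>i. l (Suc i) \<le> l i" using assms(1) unfolding is_partition_def by auto
  thus ?thesis using assms(2) by (metis lift_Suc_antimono_le)
qed

lemma part_bound: assumes "is_partition l" obtains n where "\<And>i. i \<ge> n \<Longrightarrow> l i = 0"
proof -
  have "finite {i. l i \<noteq> 0}" using assms unfolding is_partition_def by auto
  then obtain n where "\<forall>i\<in>{i. l i \<noteq> 0}. i < n" using finite_nat_set_iff_bounded by blast
  hence "\<And>i. i \<ge> n \<Longrightarrow> l i = 0" by (meson leD mem_Collect_eq)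
  thus ?thesis by (rule that)
qed

lemma bseq_strict: assumes "is_partition l" "i < j" shows "bseq t l j < bseq t l i"
  using part_mono[OF assms(1), of i j] assms(2) unfolding bseq_def by auto

lemma bseq_inj: assumes "is_partition l" shows "inj (bseq t l)"
  by (metis assms bseq_strict injI linorder_neqE_nat order_less_irrefl)

lemma bseq_lower: "bseq t l i \<ge> t - int i - 1"
  unfolding bseq_def by simp

lemma split_beta:
  fixes z t :: int
  assumes "is_partition l" "\<forall>i\<ge>n. l i = 0" "z \<le> t - int n"
  shows "beta t l = bseq t l ` {..<nat (t - z)} \<union> {x. x < z}"
    and "bseq t l ` {..<nat (t - z)} \<inter> {x. x < z} = {}"
proof -
  { fix i assume "i < nat (t - z)"
    hence "bseq t l i \<ge> z" using bseq_lower[where t=t and l=l and i=i] by linarith }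
  thus "bseq t l ` {..<nat (t - z)} \<inter> {x. x < z} = {}" by force
  show "beta t l = bseq t l ` {..<nat (t - z)} \<union> {x. x < z}"
  proof
    show "beta t l \<subseteq> bseq t l ` {..<nat (t - z)} \<union> {x. x < z}"
    proof
      fix x assume "x \<in> beta t l"
      then obtain i where i: "x = bseq t l i" by (auto simp: beta_range)
      show "x \<in> bseq t l ` {..<nat (t - z)} \<union> {x. x < z}"
      proof (cases "i < nat (t - z)")
        case True thus ?thesis using i by auto
      next
        case False
        hence "l i = 0" using assms by auto
        thus ?thesis using i False unfolding bseq_def by auto
      qed
    qed
    show "bseq t l ` {..<nat (t - z)} \<union> {x. x < z} \<subseteq> beta t l"
    proof
      fix x assume "x \<in> bseq t l ` {..<nat (t - z)} \<union> {x. x < z}"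
      moreover have "x < z \<Longrightarrow> x \<in> beta t l"
      proof -
        assume "x < z"
        define i where "i = nat (t - 1 - x)"
        have "i \<ge> n" using \<open>x < z\<close> assms(3) unfolding i_def by auto
        hence "bseq t l i = x" using assms(2) \<open>x < z\<close> assms(3) unfolding bseq_def i_def by auto
        thus ?thesis by (auto simp: beta_range)
      qed
      ultimately show "x \<in> beta t l" by (auto simp: beta_range)
    qed
  qed
qed

lemma Dl_split:
  assumes "X \<inter> T = {}" "Y \<inter> T = {}" "finite X" "finite Y"
  shows "Dl f (X \<union> T) (Y \<union> T) = sum f X - sum f Y"
proof -
  have 1: "(X \<union> T) - (Y \<union> T) = X - (X \<inter> Y)" using assms by auto
  have 2: "(Y \<union> T) - (X \<union> T) = Y - (X \<inter> Y)" using assms by auto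
  show ?thesis unfolding Dl_def 1 2
    using assms by (simp add: sum_diff)
qed

lemma Dl_beta:
  fixes z t t' :: int
  assumes "is_partition l" "is_partition l'" "\<forall>i\<ge>n. l i = 0" "\<forall>i\<ge>n'. l' i = 0"
    "z \<le> t - int n" "z \<le> t' - int n'"
  shows "Dl f (beta t l) (beta t' l') = (\<Sum>i<nat (t - z). f (bseq t l i)) - (\<Sum>i<nat (t' - z). f (bseq t' l' i))"
proof -
  note s1 = split_beta[OF assms(1,3,5)] and s2 = split_beta[OF assms(2,4,6)]
  have "Dl f (beta t l) (beta t' l') = sum f (bseq t l ` {..<nat (t - z)}) - sum f (bseq t' l' ` {..<nat (t' - z)})"
    apply (subst s1(1))
    apply (subst s2(1))
    apply (rule Dl_split[OF s1(2) s2(2)])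
    by auto
  also have "\<dots> = (\<Sum>i<nat (t - z). f (bseq t l i)) - (\<Sum>i<nat (t' - z). f (bseq t' l' i))"
    using bseq_inj[OF assms(1)] bseq_inj[OF assms(2)]
    by (simp add: sum.reindex inj_on_subset[of _ UNIV])
  finally show ?thesis .
qed

lemma Dl_charge:
  assumes "is_partition l" "is_partition l'"
  shows "Dl (\<lambda>_. 1) (beta t l) (beta t' l') = t - t'"
proof -
  obtain n where n: "\<And>i. i \<ge> n \<Longrightarrow> l i = 0" using part_bound[OF assms(1)] by blast
  obtain n' where n': "\<And>i. i \<ge> n' \<Longrightarrow> l' i = 0" using part_bound[OF assms(2)] by blast
  define z where "z = min (t - int n) (t' - int n')"
  show ?thesis using Dl_beta[OF assms, of n n' z, where f = "\<lambda>_. 1"] n n' unfolding z_def by auto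
qed

lemma div_decomp: "(N::int) > 0 \<Longrightarrow> 0 \<le> \<rho> \<Longrightarrow> \<rho> < N \<Longrightarrow> (N * q + \<rho>) div N = q"
  by (simp add: add.commute)
lemma ind_div:
  fixes N j x :: int
  assumes "N > 0" "0 \<le> j" "j < N"
  shows "(if x mod N = j then 1 else 0) = (x - j) div N - (x - 1 - j) div N"
proof -
  define a where "a = x - j"
  have am: "a = N * (a div N) + a mod N" by simp
  have r: "0 \<le> a mod N" "a mod N < N" using assms by auto
  have eq: "x mod N = j \<longleftrightarrow> a mod N = 0"
    unfolding a_def using assms by (metis mod_eq_dvd_iff mod_pos_pos_trivial dvd_eq_mod_eq_0)
  show ?thesis
  proof (cases "a mod N = 0")
    case True
    have e2: "x - 1 - j = N * (a div N - 1) + (N - 1)" using am True unfolding a_def by (simp add: algebra_simps)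
    have "(x - 1 - j) div N = (N * (a div N - 1) + (N - 1)) div N" by (simp only: e2)
    also have "\<dots> = a div N - 1" by (rule div_decomp) (use assms in auto)
    finally have "(x - 1 - j) div N = a div N - 1" .
    thus ?thesis using True eq unfolding a_def by simp
  next
    case False
    have e2: "x - 1 - j = N * (a div N) + (a mod N - 1)" using am unfolding a_def by (simp add: algebra_simps)
    have "(x - 1 - j) div N = (N * (a div N) + (a mod N - 1)) div N" by (simp only: e2)
    also have "\<dots> = a div N" by (rule div_decomp) (use assms r False in linarith)+
    finally have "(x - 1 - j) div N = a div N" .
    thus ?thesis using False eq unfolding a_def by simp
  qed
qed
lemma div_shift: "(N::int) > 0 \<Longrightarrow> (x - j) div N = (x - j mod N) div N - j div N"
proof -
  assume N: "N > 0"
  have "x - j = (x - j mod N) + (- (j div N)) * N" using div_mult_mod_eq[of j N] by (simp add: algebra_simps)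
  hence "(x - j) div N = - (j div N) + (x - j mod N) div N" using N by (metis div_mult_self1 less_irrefl)
  thus ?thesis by simp
qed

lemma Dl_add: "Dl (\<lambda>x. f x + g x) A A' = Dl f A A' + Dl g A A'"
  unfolding Dl_def by (simp add: sum.distrib)
lemma Dl_diff: "Dl (\<lambda>x. f x - g x) A A' = Dl f A A' - Dl g A A'"
  unfolding Dl_def by (simp add: sum_subtractf)
lemma Dl_cmult: "Dl (\<lambda>x. c * f x) A A' = c * Dl f A A'"
  unfolding Dl_def by (simp add: sum_distrib_left right_diff_distrib)
lemma Dl_const: "Dl (\<lambda>x. c) A A' = c * Dl (\<lambda>_. 1) A A'"
  using Dl_cmult[of c "\<lambda>_. 1"] by simp
lemma Dl_sum: "Dl (\<lambda>x. \<Sum>k\<in>K. f k x) A A' = (\<Sum>k\<in>K. Dl (f k) A A')"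
  unfolding Dl_def by (simp add: sum.swap[of _ K] sum_subtractf)

lemma count_img:
  assumes "finite A"
  shows "int (count (image_mset g (mset_set A)) j) = (\<Sum>x\<in>A. if g x = j then 1 else 0 :: int)"
proof -
  have "count (image_mset g (mset_set A)) j = (\<Sum>y\<in>g -` {j} \<inter> A. 1)"
    using assms by (simp add: count_image_mset)
  also have "\<dots> = card {x\<in>A. g x = j}" by (simp add: Int_commute vimage_def Collect_conj_eq)
  finally have "int (count (image_mset g (mset_set A)) j) = int (card {x\<in>A. g x = j})" by simp
  also have "\<dots> = (\<Sum>x\<in>A. if g x = j then 1 else 0 :: int)"
    using assms by (simp add: sum.If_cases Int_def)
  finally show ?thesis .
qed

lemma nodes_Sigma:
  assumes "\<forall>i\<ge>n. l i = 0"
  shows "nodes l = Sigma {..<n} (\<lambda>i. {1..l i})"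
proof (rule set_eqI)
  fix p :: "nat \<times> nat"
  obtain i y where p: "p = (i, y)" by fastforce
  have "p \<in> nodes l \<longleftrightarrow> 1 \<le> y \<and> y \<le> l i" unfolding nodes_def p by simp
  also have "\<dots> \<longleftrightarrow> i < n \<and> 1 \<le> y \<and> y \<le> l i"
    using assms by (metis le_zero_eq not_le not_one_le_zero order_trans)
  also have "\<dots> \<longleftrightarrow> p \<in> Sigma {..<n} (\<lambda>i. {1..l i})" unfolding p by simp
  finally show "p \<in> nodes l \<longleftrightarrow> p \<in> Sigma {..<n} (\<lambda>i. {1..l i})" .
qed

lemma finite_nodes: assumes "is_partition l" shows "finite (nodes l)"
proof -
  obtain n where "\<And>i. i \<ge> n \<Longrightarrow> l i = 0" using part_bound[OF assms] by blast
  hence "\<forall>i\<ge>n. l i = 0" by auto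
  thus ?thesis by (simp add: nodes_Sigma)
qed

lemma psize_card: assumes "is_partition l" shows "psize l = card (nodes l)"
proof -
  obtain n where n: "\<And>i. i \<ge> n \<Longrightarrow> l i = 0" using part_bound[OF assms] by blast
  hence n': "\<forall>i\<ge>n. l i = 0" by auto
  have "card (nodes l) = (\<Sum>i<n. l i)" by (simp add: nodes_Sigma[OF n'] card_SigmaI)
  also have "\<dots> = psize l" unfolding psize_def
  proof (rule sum.mono_neutral_right)
    show "finite {..<n}" by simp
    show "{i. l i \<noteq> 0} \<subseteq> {..<n}" using n' by (metis (mono_tags) lessThan_iff mem_Collect_eq not_le subsetI)
    show "\<forall>i\<in>{..<n} - {i. l i \<noteq> 0}. l i = 0" by simp
  qed
  finally show ?thesis by simp
qed

lemma telescope: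
  assumes "\<forall>x. d x = F x - F (x - 1)"
  shows "(\<Sum>y\<in>{1..L::nat}. d (h + int y)) = F (h + int L) - (F h :: int)"
proof (induction L)
  case 0 thus ?case by simp
next
  case (Suc L)
  have "{1..Suc L} = insert (Suc L) {1..L}" by auto
  hence "(\<Sum>y\<in>{1..Suc L}. d (h + int y)) = d (h + int (Suc L)) + (\<Sum>y\<in>{1..L}. d (h + int y))" by simp
  thus ?case using Suc assms by simp
qed

lemma nodes_sum:
  assumes "\<forall>i\<ge>n. l i = 0" "\<forall>x. d x = F x - F (x - 1)"
  shows "(\<Sum>p\<in>nodes l. d (s + int (snd p) - int (fst p + 1))) = (\<Sum>i<n. F (bseq s l i) - (F (s - int (i + 1)) :: int))"
proof -
  have "(\<Sum>i<n. \<Sum>y\<in>{1..l i}. d (s + int y - int (i + 1))) = (\<Sum>(i,y)\<in>Sigma {..<n} (\<lambda>i. {1..l i}). d (s + int y - int (i + 1)))"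
    by (rule sum.Sigma) auto
  hence "(\<Sum>p\<in>nodes l. d (s + int (snd p) - int (fst p + 1))) = (\<Sum>i<n. \<Sum>y\<in>{1..l i}. d (s + int y - int (i + 1)))"
    unfolding nodes_Sigma[OF assms(1)] by (simp add: case_prod_beta')
  also have "\<dots> = (\<Sum>i<n. F (bseq s l i) - F (s - int (i + 1)))"
  proof (rule sum.cong)
    fix i
    have "(\<Sum>y\<in>{1..l i}. d (s + int y - int (i + 1))) = (\<Sum>y\<in>{1..l i}. d ((s - int (i + 1)) + int y))"
      by (rule sum.cong) (simp_all add: algebra_simps)
    also have "\<dots> = F ((s - int (i + 1)) + int (l i)) - F (s - int (i + 1))"
      by (rule telescope[OF assms(2)])
    also have "(s - int (i + 1)) + int (l i) = bseq s l i" unfolding bseq_def by simp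
    finally show "(\<Sum>y\<in>{1..l i}. d (s + int y - int (i + 1))) = F (bseq s l i) - F (s - int (i + 1))" .
  qed simp
  finally show ?thesis .
qed

lemma nodes_diff:
  assumes "is_partition l" "is_partition l'" "\<forall>x. d x = F x - F (x - 1)"
  shows "(\<Sum>p\<in>nodes l. d (s + int (snd p) - int (fst p + 1))) - (\<Sum>p\<in>nodes l'. d (s + int (snd p) - int (fst p + 1)))
     = Dl F (beta s l) (beta s l')"
proof -
  obtain n1 where n1: "\<And>i. i \<ge> n1 \<Longrightarrow> l i = 0" using part_bound[OF assms(1)] by blast
  obtain n2 where n2: "\<And>i. i \<ge> n2 \<Longrightarrow> l' i = 0" using part_bound[OF assms(2)] by blast
  define n where "n = max n1 n2"
  have a: "\<forall>i\<ge>n. l i = 0" "\<forall>i\<ge>n. l' i = 0" using n1 n2 unfolding n_def by auto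
  have "Dl F (beta s l) (beta s l') = (\<Sum>i<nat (s - (s - int n)). F (bseq s l i)) - (\<Sum>i<nat (s - (s - int n)). F (bseq s l' i))"
    by (rule Dl_beta[OF assms(1,2) a]) auto
  also have "\<dots> = (\<Sum>i<n. F (bseq s l i)) - (\<Sum>i<n. F (bseq s l' i))" by simp
  finally show ?thesis using nodes_sum[OF a(1) assms(3), of s] nodes_sum[OF a(2) assms(3), of s]
    by (simp add: sum_subtractf)
qed


lemma count_residues:
  assumes "\<forall>k<m. is_partition (fst X k)"
  shows "int (count (residues N m X) j) =
    (\<Sum>k<m. \<Sum>p\<in>nodes (fst X k). if (snd X k + int (snd p) - int (fst p + 1)) mod int N = j then 1 else 0)"
proof -
  have "int (count (residues N m X) j) = (\<Sum>k<m. int (count (image_mset (\<lambda>(i, y). (snd X k + int y - int (i + 1)) mod int N)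
                                 (mset_set (nodes (fst X k)))) j))"
    unfolding residues_def by (simp add: count_sum)
  also have "\<dots> = (\<Sum>k<m. \<Sum>p\<in>nodes (fst X k). if (snd X k + int (snd p) - int (fst p + 1)) mod int N = j then 1 else 0)"
    by (rule sum.cong) (use assms in \<open>auto simp: count_img finite_nodes case_prod_beta'\<close>)
  finally show ?thesis .
qed

lemma block_iff:
  fixes N m :: nat and X Y :: multiconf
  assumes N: "N > 0" and P: "\<forall>k<m. is_partition (fst X k) \<and> is_partition (fst Y k)"
  shows "block_eq N m X Y \<longleftrightarrow> (\<forall>k<m. snd X k = snd Y k)
     \<and> (\<Sum>k<m. Dl (\<lambda>x. x) (beta (snd X k) (fst X k)) (beta (snd Y k) (fst Y k))) = 0
     \<and> (\<forall>j. (\<Sum>k<m. Dl (\<lambda>x. (x - j) div int N) (beta (snd X k) (fst X k)) (beta (snd Y k) (fst Y k))) = 0)"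
proof (cases "\<forall>k<m. snd X k = snd Y k")
  case False thus ?thesis unfolding block_eq_def by blast
next
  case ch: True
  define BX where "BX k = beta (snd X k) (fst X k)" for k
  define BY where "BY k = beta (snd Y k) (fst Y k)" for k
  have BY': "BY k = beta (snd X k) (fst Y k)" if "k < m" for k using ch that unfolding BY_def by simp
  have sz: "int (psize (fst X k)) - int (psize (fst Y k)) = Dl (\<lambda>x. x) (BX k) (BY k)" if k: "k < m" for k
  proof -
    have "int (psize (fst X k)) = (\<Sum>p\<in>nodes (fst X k). (\<lambda>_. 1::int) (snd X k + int (snd p) - int (fst p + 1)))"
      using P k by (simp add: psize_card)
    moreover have "int (psize (fst Y k)) = (\<Sum>p\<in>nodes (fst Y k). (\<lambda>_. 1::int) (snd X k + int (snd p) - int (fst p + 1)))"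
      using P k by (simp add: psize_card)
    ultimately show ?thesis unfolding BX_def BY'[OF k]
      using nodes_diff[of "fst X k" "fst Y k" "\<lambda>_. 1" "\<lambda>x. x" "snd X k"] P k by simp
  qed
  have size_iff: "(\<Sum>k<m. psize (fst X k)) = (\<Sum>k<m. psize (fst Y k)) \<longleftrightarrow> (\<Sum>k<m. Dl (\<lambda>x. x) (BX k) (BY k)) = 0"
  proof -
    have "(\<Sum>k<m. psize (fst X k)) = (\<Sum>k<m. psize (fst Y k)) \<longleftrightarrow>
        (\<Sum>k<m. int (psize (fst X k))) - (\<Sum>k<m. int (psize (fst Y k))) = 0"
      by (simp flip: of_nat_sum)
    also have "(\<Sum>k<m. int (psize (fst X k))) - (\<Sum>k<m. int (psize (fst Y k))) = (\<Sum>k<m. Dl (\<lambda>x. x) (BX k) (BY k))"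
      by (simp add: sz sum_subtractf[symmetric])
    finally show ?thesis .
  qed
  define S where "S j = (\<Sum>k<m. Dl (\<lambda>x. (x - j) div int N) (BX k) (BY k))" for j
  have cnt: "int (count (residues N m X) j) - int (count (residues N m Y) j) = S j"
    if j: "0 \<le> j" "j < int N" for j
  proof -
    have d: "\<forall>x. (if x mod int N = j then 1 else 0) = (x - j) div int N - (x - 1 - j) div int N"
      using ind_div[of "int N" j] N j by auto
    have "int (count (residues N m X) j) - int (count (residues N m Y) j) =
      (\<Sum>k<m. (\<Sum>p\<in>nodes (fst X k). if (snd X k + int (snd p) - int (fst p + 1)) mod int N = j then 1 else 0)
            - (\<Sum>p\<in>nodes (fst Y k). if (snd X k + int (snd p) - int (fst p + 1)) mod int N = j then 1 else 0))"
      using count_residues[of m X N j] count_residues[of m Y N j] P ch by (simp add: sum_subtractf)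
    also have "\<dots> = S j" unfolding S_def
    proof (rule sum.cong)
      fix k assume "k \<in> {..<m}"
      hence k: "k < m" by simp
      show "(\<Sum>p\<in>nodes (fst X k). if (snd X k + int (snd p) - int (fst p + 1)) mod int N = j then 1 else 0)
            - (\<Sum>p\<in>nodes (fst Y k). if (snd X k + int (snd p) - int (fst p + 1)) mod int N = j then 1 else 0)
            = Dl (\<lambda>x. (x - j) div int N) (BX k) (BY k)"
        unfolding BX_def BY'[OF k]
        using nodes_diff[of "fst X k" "fst Y k" "\<lambda>x. if x mod int N = j then 1 else 0" "\<lambda>x. (x - j) div int N" "snd X k"] P k d
        by simp
    qed simp
    finally show ?thesis .
  qed
  have cnt0: "count (residues N m X) j = 0" "count (residues N m Y) j = 0"
    if j: "\<not> (0 \<le> j \<and> j < int N)" for j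
  proof -
    have "\<And>x. x mod int N \<noteq> j" using j N by (metis Euclidean_Rings.pos_mod_bound Euclidean_Rings.pos_mod_sign of_nat_0_less_iff)
    hence "int (count (residues N m X) j) = 0" "int (count (residues N m Y) j) = 0"
      using count_residues[of m X N j] count_residues[of m Y N j] P by auto
    thus "count (residues N m X) j = 0" "count (residues N m Y) j = 0" by simp_all
  qed
  have res_iff: "residues N m X = residues N m Y \<longleftrightarrow> (\<forall>j. 0 \<le> j \<and> j < int N \<longrightarrow> S j = 0)"
  proof
    assume "residues N m X = residues N m Y"
    thus "\<forall>j. 0 \<le> j \<and> j < int N \<longrightarrow> S j = 0" using cnt by force
  next
    assume a: "\<forall>j. 0 \<le> j \<and> j < int N \<longrightarrow> S j = 0"
    show "residues N m X = residues N m Y"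
    proof (rule multiset_eqI)
      fix j
      show "count (residues N m X) j = count (residues N m Y) j"
      proof (cases "0 \<le> j \<and> j < int N")
        case True thus ?thesis using a cnt[of j] by auto
      next
        case False thus ?thesis using cnt0[OF False] by simp
      qed
    qed
  qed
  have ch0: "Dl (\<lambda>_. 1) (BX k) (BY k) = 0" if "k < m" for k
    unfolding BX_def BY'[OF that] using Dl_charge P that by simp
  have Sshift: "S j = S (j mod int N)" for j
  proof -
    have "S j = (\<Sum>k<m. Dl (\<lambda>x. (x - j mod int N) div int N - j div int N) (BX k) (BY k))"
    proof -
      have "(\<lambda>x. (x - j) div int N) = (\<lambda>x. (x - j mod int N) div int N - j div int N)"
        by (rule ext, rule div_shift) (use N in simp)
      thus ?thesis unfolding S_def by simp
    qed
    also have "\<dots> = (\<Sum>k<m. Dl (\<lambda>x. (x - j mod int N) div int N) (BX k) (BY k))"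
      by (rule sum.cong) (simp_all add: Dl_diff Dl_const[of "j div int N"] ch0)
    finally show ?thesis unfolding S_def .
  qed
  have all_iff: "(\<forall>j. 0 \<le> j \<and> j < int N \<longrightarrow> S j = 0) \<longleftrightarrow> (\<forall>j. S j = 0)"
    using Sshift N by (metis Euclidean_Rings.pos_mod_bound Euclidean_Rings.pos_mod_sign of_nat_0_less_iff)
  show ?thesis unfolding block_eq_def using ch size_iff res_iff all_iff
    unfolding S_def BX_def BY_def by simp
qed


lemma beta_betaset: assumes "is_partition l" shows "is_betaset (beta t l)"
proof -
  obtain n where n: "\<And>i. i \<ge> n \<Longrightarrow> l i = 0" using part_bound[OF assms] by blast
  have lo: "\<forall>x\<le>t - int n - 1. x \<in> beta t l"
  proof (intro allI impI)
    fix x assume x: "x \<le> t - int n - 1"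
    define i where "i = nat (t - 1 - x)"
    have "i \<ge> n" using x unfolding i_def by auto
    hence "bseq t l i = x" using n x unfolding bseq_def i_def by auto
    thus "x \<in> beta t l" by (auto simp: beta_range)
  qed
  have hi: "\<forall>x\<ge>t + int (l 0). x \<notin> beta t l"
  proof (intro allI impI)
    fix x assume x: "x \<ge> t + int (l 0)"
    { fix i have "l i \<le> l 0" using part_mono[OF assms, of 0 i] by simp
      hence "bseq t l i < t + int (l 0)" unfolding bseq_def by simp }
    thus "x \<notin> beta t l" using x by (auto simp: beta_range) (metis not_le)
  qed
  show ?thesis unfolding is_betaset_def using lo hi by blast
qed

lemma greatest_int:
  fixes P :: "int \<Rightarrow> bool"
  assumes "P x0" "\<And>x. P x \<Longrightarrow> x \<le> M"
  shows "P (GREATEST x. P x) \<and> (\<forall>y. P y \<longrightarrow> y \<le> (GREATEST x. P x))"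
proof -
  define S where "S = {x. P x \<and> x0 \<le> x}"
  have fin: "finite S" unfolding S_def by (rule finite_subset[of _ "{x0..M}"]) (use assms in auto)
  have ne: "x0 \<in> S" unfolding S_def using assms by auto
  define g where "g = Max S"
  have gS: "g \<in> S" unfolding g_def using fin ne Max_in by blast
  have gmax: "\<forall>y. P y \<longrightarrow> y \<le> g"
  proof (intro allI impI)
    fix y assume "P y"
    show "y \<le> g"
    proof (cases "x0 \<le> y")
      case True hence "y \<in> S" using \<open>P y\<close> unfolding S_def by auto
      thus ?thesis unfolding g_def using fin by simp
    next
      case False thus ?thesis using gS unfolding S_def by auto
    qed
  qed
  have "(GREATEST x. P x) = g" by (rule Greatest_equality) (use gS gmax in \<open>auto simp: S_def\<close>)
  thus ?thesis using gS gmax unfolding S_def by auto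
qed

lemma strict_antimono:
  fixes b :: "nat \<Rightarrow> int"
  assumes "\<forall>i. b (Suc i) < b i" "i \<le> j"
  shows "b j \<le> b i - int (j - i)"
proof -
  have "\<forall>k. b (i + k) \<le> b i - int k"
  proof
    fix k show "b (i + k) \<le> b i - int k"
    proof (induction k)
      case 0 thus ?case by simp
    next
      case (Suc k) thus ?case using assms(1)[rule_format, of "i + k"] by simp
    qed
  qed
  from this[rule_format, of "j - i"] assms(2) show ?thesis by simp
qed

lemma enum_unique:
  fixes b b' :: "nat \<Rightarrow> int"
  assumes "\<forall>i. b (Suc i) < b i" "\<forall>i. b' (Suc i) < b' i" "range b = range b'"
  shows "b = b'"
proof -
  have gen: "c 0 = (GREATEST x. x \<in> range c) \<and> (\<forall>i. c (Suc i) = (GREATEST x. x \<in> range c \<and> x < c i))"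
    if c: "\<forall>i. c (Suc i) < c i" for c :: "nat \<Rightarrow> int"
  proof
    show "c 0 = (GREATEST x. x \<in> range c)"
      proof (rule Greatest_equality[symmetric])
      fix y assume "y \<in> range c"
      then obtain j where "y = c j" by auto
      thus "y \<le> c 0" using strict_antimono[OF c, of 0 j] by simp
    qed simp
    show "\<forall>i. c (Suc i) = (GREATEST x. x \<in> range c \<and> x < c i)"
    proof
      fix i
      show "c (Suc i) = (GREATEST x. x \<in> range c \<and> x < c i)"
      proof (rule Greatest_equality[symmetric])
        show "c (Suc i) \<in> range c \<and> c (Suc i) < c i" using c by auto
        fix y assume "y \<in> range c \<and> y < c i"
        then obtain j where j: "y = c j" "c j < c i" by auto
        have "\<not> j \<le> i" using strict_antimono[OF c, of j i] j by auto
        hence "Suc i \<le> j" by simp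
        thus "y \<le> c (Suc i)" using strict_antimono[OF c, of "Suc i" j] j by simp
      qed
    qed
  qed
  have "\<forall>i. b i = b' i"
  proof
    fix i show "b i = b' i"
    proof (induction i)
      case 0 thus ?case using gen[OF assms(1)] gen[OF assms(2)] assms(3) by simp
    next
      case (Suc i) thus ?case using gen[OF assms(1)] gen[OF assms(2)] assms(3) by simp
    qed
  qed
  thus ?thesis by auto
qed

lemma beta_inj:
  assumes "is_partition l" "is_partition l'" "beta t l = beta t' l'"
  shows "l = l' \<and> t = t'"
proof -
  have "bseq t l = bseq t' l'"
    by (rule enum_unique) (use bseq_strict[OF assms(1)] bseq_strict[OF assms(2)] assms(3) in \<open>auto simp: beta_range\<close>)
  obtain n where n: "\<And>i. i \<ge> n \<Longrightarrow> l i = 0" using part_bound[OF assms(1)] by blast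
  obtain n' where n': "\<And>i. i \<ge> n' \<Longrightarrow> l' i = 0" using part_bound[OF assms(2)] by blast
  have "bseq t l (max n n') = bseq t' l' (max n n')" using \<open>bseq t l = bseq t' l'\<close> by simp
  hence tt: "t = t'" using n[of "max n n'"] n'[of "max n n'"] unfolding bseq_def by simp
  have "l i = l' i" for i using fun_cong[OF \<open>bseq t l = bseq t' l'\<close>, of i] tt unfolding bseq_def by simp
  thus ?thesis using tt by auto
qed

lemma decode_beta: assumes "is_partition l" shows "decode (beta t l) = (l, t)"
  unfolding decode_def
proof (rule the_equality)
  show "case (l, t) of (l', t') \<Rightarrow> is_partition l' \<and> beta t' l' = beta t l" using assms by simp
  fix p assume "case p of (l', t') \<Rightarrow> is_partition l' \<and> beta t' l' = beta t l"
  thus "p = (l, t)" using beta_inj[OF _ assms] by (cases p) auto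
qed

lemma betaset_exists:
  assumes "is_betaset B"
  shows "\<exists>l t. is_partition l \<and> beta t l = B"
proof -
  obtain a where a: "\<forall>x\<le>a. x \<in> B" using assms unfolding is_betaset_def by blast
  obtain h where h: "\<forall>x\<ge>h. x \<notin> B" using assms unfolding is_betaset_def by blast
  have hB: "x \<in> B \<Longrightarrow> x \<le> h" for x using h by (meson not_le order_less_imp_le)
  define b where "b = rec_nat (GREATEST x. x \<in> B) (\<lambda>i c. GREATEST x. x \<in> B \<and> x < c)"
  have b0: "b 0 = (GREATEST x. x \<in> B)" and bS: "b (Suc i) = (GREATEST x. x \<in> B \<and> x < b i)" for i
    unfolding b_def by simp_all
  have G0: "b 0 \<in> B \<and> (\<forall>y. y \<in> B \<longrightarrow> y \<le> b 0)"
    unfolding b0 by (rule greatest_int[of _ a h]) (use a hB in auto)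
  have GS: "(b (Suc i) \<in> B \<and> b (Suc i) < b i) \<and> (\<forall>y. y \<in> B \<and> y < b i \<longrightarrow> y \<le> b (Suc i))" for i
    unfolding bS by (rule greatest_int[of _ "min a (b i - 1)" "b i"]) (use a in auto)
  have inB: "b i \<in> B" for i by (cases i) (use G0 GS in auto)
  have strict: "\<forall>i. b (Suc i) < b i" using GS by auto
  have cover: "\<forall>i. \<forall>x\<in>B. x \<le> b i \<and> b i - x \<le> int n \<longrightarrow> (\<exists>j. x = b j)" for n
  proof (induction n)
    case 0 thus ?case by auto
  next
    case (Suc n)
    show ?case
    proof (intro allI ballI impI)
      fix i x assume x: "x \<in> B" "x \<le> b i \<and> b i - x \<le> int (Suc n)"
      show "\<exists>j. x = b j"
      proof (cases "x = b i")
        case True thus ?thesis by blast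
      next
        case False
        hence "x \<le> b (Suc i)" using GS[of i] x by auto
        moreover have "b (Suc i) < b i" using strict by blast
        moreover have "b (Suc i) - x \<le> int n" using calculation x by linarith
        ultimately show ?thesis using Suc.IH x(1) by blast
      qed
    qed
  qed
  have rng: "range b = B"
  proof
    show "range b \<subseteq> B" using inB by auto
    show "B \<subseteq> range b"
    proof
      fix x assume x: "x \<in> B"
      have "x \<le> b 0" using G0 x by auto
      moreover from cover[of "nat (b 0 - x)"]
      have "\<forall>y\<in>B. y \<le> b 0 \<and> b 0 - y \<le> int (nat (b 0 - x)) \<longrightarrow> (\<exists>j. y = b j)" by blast
      ultimately have "\<exists>j. x = b j" using x by simp
      thus "x \<in> range b" by auto
    qed
  qed
  define i0 where "i0 = nat (b 0 - a)"
  have bi0: "b i0 \<le> a" using strict_antimono[OF strict, of 0 i0] unfolding i0_def by (cases "a \<le> b 0") auto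
  have tail: "b (i0 + k) = b i0 - int k" for k
  proof (induction k)
    case 0 thus ?case by simp
  next
    case (Suc k)
    have "b (i0 + k) - 1 \<in> B" using a Suc.IH bi0 by auto
    hence "b (i0 + k) - 1 \<le> b (Suc (i0 + k))" using GS[of "i0 + k"] by auto
    moreover have "b (Suc (i0 + k)) < b (i0 + k)" using strict by auto
    ultimately show ?case using Suc.IH by simp
  qed
  define t where "t = b i0 + int i0 + 1"
  define l where "l i = nat (b i + int i + 1 - t)" for i
  have nonneg: "b i + int i + 1 - t \<ge> 0" for i
  proof -
    define j where "j = max i i0"
    have "b j \<le> b i - int (j - i)" using strict_antimono[OF strict, of i j] unfolding j_def by simp
    moreover have "b j = b i0 - int (j - i0)" using tail[of "j - i0"] unfolding j_def by simp
    ultimately show ?thesis unfolding t_def j_def by auto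
  qed
  have bseq_eq: "bseq t l i = b i" for i unfolding bseq_def l_def using nonneg[of i] by simp
  have part: "is_partition l"
    unfolding is_partition_def
  proof
    show "\<forall>i. l (Suc i) \<le> l i"
    proof
      fix i have "b (Suc i) < b i" using strict by blast
      thus "l (Suc i) \<le> l i" unfolding l_def by (intro nat_mono) simp
    qed
    have "l i = 0" if "i \<ge> i0" for i
      using tail[of "i - i0"] that unfolding l_def t_def by simp
    hence "{i. l i \<noteq> 0} \<subseteq> {..<i0}" by (metis (mono_tags) lessThan_iff mem_Collect_eq not_le subsetI)
    thus "finite {i. l i \<noteq> 0}" by (rule finite_subset) simp
  qed
  have "beta t l = B" unfolding beta_range using bseq_eq rng by (metis ext)
  thus ?thesis using part by blast
qed

lemma decode_props:
  assumes "is_betaset B"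
  shows "is_partition (fst (decode B)) \<and> beta (snd (decode B)) (fst (decode B)) = B"
proof -
  obtain l t where "is_partition l" "beta t l = B" using betaset_exists[OF assms] by blast
  thus ?thesis using decode_beta by auto
qed


definition Cls :: "(int \<Rightarrow> nat \<times> int) \<Rightarrow> int set \<Rightarrow> nat \<Rightarrow> int set" where
  "Cls p B c = {y. \<exists>b\<in>B. p b = (c, y)}"

lemma Cls_diff:
  assumes "inj p"
  shows "Cls p B c - Cls p B' c = (\<lambda>b. snd (p b)) ` {b \<in> B - B'. fst (p b) = c}"
proof -
  have "y \<in> Cls p B c - Cls p B' c \<longleftrightarrow> y \<in> (\<lambda>b. snd (p b)) ` {b \<in> B - B'. fst (p b) = c}" for y
  proof
    assume "y \<in> Cls p B c - Cls p B' c"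
    then obtain b where b: "b \<in> B" "p b = (c, y)" and n: "\<not> (\<exists>b\<in>B'. p b = (c, y))" unfolding Cls_def by auto
    hence "b \<notin> B'" by auto
    thus "y \<in> (\<lambda>b. snd (p b)) ` {b \<in> B - B'. fst (p b) = c}" using b by (auto intro!: image_eqI[of _ _ b])
  next
    assume "y \<in> (\<lambda>b. snd (p b)) ` {b \<in> B - B'. fst (p b) = c}"
    then obtain b where b: "b \<in> B" "b \<notin> B'" "fst (p b) = c" "y = snd (p b)" by auto
    from b(3,4) have pb: "p b = (c, y)" by (simp add: prod_eq_iff)
    have nb: "\<not> (\<exists>b'\<in>B'. p b' = (c, y))"
    proof
      assume "\<exists>b'\<in>B'. p b' = (c, y)"
      then obtain b' where b': "b' \<in> B'" "p b' = p b" using pb by auto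
      from b'(2) have "b' = b" by (rule injD[OF assms])
      thus False using b' b(2) by simp
    qed
    have "y \<in> Cls p B c" unfolding Cls_def using b(1) pb by blast
    moreover have "y \<notin> Cls p B' c" unfolding Cls_def using nb by blast
    ultimately show "y \<in> Cls p B c - Cls p B' c" by blast
  qed
  thus ?thesis by blast
qed

lemma RE:
  assumes "inj p" "finite (B - B')" "finite (B' - B)"
  shows "Dl G (Cls p B c) (Cls p B' c) = Dl (\<lambda>b. if fst (p b) = c then G (snd (p b)) else 0) B B'"
proof -
  have inj1: "inj_on (\<lambda>b. snd (p b)) {b \<in> X. fst (p b) = c}" for X
  proof (rule inj_onI)
    fix x y assume "x \<in> {b \<in> X. fst (p b) = c}" "y \<in> {b \<in> X. fst (p b) = c}" "snd (p x) = snd (p y)"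
    hence "p x = p y" by (simp add: prod_eq_iff)
    thus "x = y" by (rule injD[OF assms(1)])
  qed
  have s: "sum G (Cls p X c - Cls p X' c) = (\<Sum>b\<in>X - X'. if fst (p b) = c then G (snd (p b)) else 0)"
    if "finite (X - X')" for X X'
  proof -
    have "sum G (Cls p X c - Cls p X' c) = (\<Sum>b\<in>{b \<in> X - X'. fst (p b) = c}. G (snd (p b)))"
      unfolding Cls_diff[OF assms(1)] by (rule sum.reindex_cong[OF inj1]) simp_all
    also have "\<dots> = (\<Sum>b\<in>X - X'. if fst (p b) = c then G (snd (p b)) else 0)"
      by (rule sum.inter_filter[OF that])
    finally show ?thesis .
  qed
  show ?thesis unfolding Dl_def using s[OF assms(2)] s[OF assms(3)] by simp
qed

lemma RE_sum:
  assumes "inj p" "finite (B - B')" "finite (B' - B)" "finite I" "\<forall>b. fst (p b) \<in> I"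
  shows "(\<Sum>c\<in>I. Dl G (Cls p B c) (Cls p B' c)) = Dl (\<lambda>b. G (snd (p b))) B B'"
proof -
  have "(\<Sum>c\<in>I. Dl G (Cls p B c) (Cls p B' c)) = (\<Sum>c\<in>I. Dl (\<lambda>b. if fst (p b) = c then G (snd (p b)) else 0) B B')"
    using RE[OF assms(1-3)] by simp
  also have "\<dots> = Dl (\<lambda>b. \<Sum>c\<in>I. if fst (p b) = c then G (snd (p b)) else 0) B B'"
    by (rule Dl_sum[symmetric])
  also have "(\<lambda>b. \<Sum>c\<in>I. if fst (p b) = c then G (snd (p b)) else 0) = (\<lambda>b. G (snd (p b)))"
    using assms(4,5) by (auto simp: sum.delta')
  finally show ?thesis .
qed

lemma beta_diff_finite:
  assumes "is_partition l" "is_partition l'"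
  shows "finite (beta t l - beta t' l')"
proof -
  obtain n where n: "\<And>i. i \<ge> n \<Longrightarrow> l i = 0" using part_bound[OF assms(1)] by blast
  obtain n' where n': "\<And>i. i \<ge> n' \<Longrightarrow> l' i = 0" using part_bound[OF assms(2)] by blast
  define z where "z = min (t - int n) (t' - int n')"
  have a: "\<forall>i\<ge>n. l i = 0" "\<forall>i\<ge>n'. l' i = 0" using n n' by auto
  note s1 = split_beta[OF assms(1) a(1), of z] and s2 = split_beta[OF assms(2) a(2), of z]
  have "beta t l - beta t' l' \<subseteq> bseq t l ` {..<nat (t - z)}"
    using s1(1) s2(1) unfolding z_def by auto
  thus ?thesis by (rule finite_subset) simp
qed

definition piE :: "nat \<Rightarrow> int \<Rightarrow> nat \<times> int" where
  "piE e b = (nat (b mod int e), b div int e)"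

lemma piE_inj: assumes "e > 0" shows "inj (piE e)"
proof (rule injI)
  fix x y assume "piE e x = piE e y"
  hence a: "nat (x mod int e) = nat (y mod int e)" "x div int e = y div int e" unfolding piE_def by auto
  have "x mod int e = int (nat (x mod int e))" "y mod int e = int (nat (y mod int e))" using assms by simp_all
  hence "x mod int e = y mod int e" "x div int e = y div int e" using a by simp_all
  thus "x = y" by (metis div_mult_mod_eq)
qed

lemma piE_fst: "e > 0 \<Longrightarrow> fst (piE e b) \<in> {..<e}"
  unfolding piE_def by (simp add: nat_less_iff)

lemma Cls_piE_mem:
  assumes "e > 0" "i < e"
  shows "y \<in> Cls (piE e) B i \<longleftrightarrow> int e * y + int i \<in> B"
proof
  assume "y \<in> Cls (piE e) B i"
  then obtain b where b: "b \<in> B" "nat (b mod int e) = i" "b div int e = y" unfolding Cls_def piE_def by auto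
  have "b mod int e = int i" using b(2) assms by auto
  hence "b = int e * y + int i" using b(3) by (metis div_mult_mod_eq mult.commute)
  thus "int e * y + int i \<in> B" using b(1) by simp
next
  assume a: "int e * y + int i \<in> B"
  have "(int e * y + int i) div int e = y" by (rule div_decomp) (use assms in auto)
  moreover have "(int e * y + int i) mod int e = int i" using assms by (simp add: add.commute)
  ultimately show "y \<in> Cls (piE e) B i" unfolding Cls_def piE_def using a by (auto intro!: bexI[of _ "int e * y + int i"])
qed

lemma eta_C_Cls:
  assumes "e > 0" "i < e"
  shows "eta_C e B i = Cls (piE e) B i"
proof -
  have "y \<in> eta_C e B i \<longleftrightarrow> int e * y + int i \<in> B" for y
  proof
    assume "y \<in> eta_C e B i"
    then obtain b where b: "b \<in> B" "b mod int e = int i" "y = (b - int i) div int e" unfolding eta_C_def by auto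
    have "b = int e * (b div int e) + int i" using b(2) by (metis div_mult_mod_eq mult.commute)
    moreover have "(b - int i) div int e = b div int e" using b(2) by (metis minus_mod_eq_mult_div mult.commute nonzero_mult_div_cancel_left of_nat_0_less_iff assms(1) less_irrefl)
    ultimately show "int e * y + int i \<in> B" using b by simp
  next
    assume a: "int e * y + int i \<in> B"
    have "(int e * y + int i) mod int e = int i" using assms by (simp add: add.commute)
    moreover have "y = ((int e * y + int i) - int i) div int e" using assms by simp
    ultimately show "y \<in> eta_C e B i" unfolding eta_C_def using a by blast
  qed
  thus ?thesis using Cls_piE_mem[OF assms] by blast
qed

lemma Cls_piE_betaset:
  assumes "e > 0" "i < e" "is_betaset B"
  shows "is_betaset (Cls (piE e) B i)"
proof -
  obtain a where a: "\<forall>x\<le>a. x \<in> B" using assms(3) unfolding is_betaset_def by blast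
  obtain h where h: "\<forall>x\<ge>h. x \<notin> B" using assms(3) unfolding is_betaset_def by blast
  have lo: "\<forall>y \<le> a div int e - 1. y \<in> Cls (piE e) B i"
  proof (intro allI impI)
    fix y assume y: "y \<le> a div int e - 1"
    have "int e * y \<le> int e * (a div int e - 1)" using y assms(1) by (simp add: mult_left_mono)
    moreover have "int e * (a div int e) \<le> a"
    proof -
      have "int e * (a div int e) = a - a mod int e" by (simp add: minus_mod_eq_mult_div)
      moreover have "0 \<le> a mod int e" using assms(1) by simp
      ultimately show ?thesis by linarith
    qed
    ultimately have "int e * y + int i \<le> a" using assms(2) by (simp add: algebra_simps)
    thus "y \<in> Cls (piE e) B i" using a Cls_piE_mem[OF assms(1,2)] by auto
  qed
  have hi: "\<forall>y \<ge> \<bar>h\<bar> + 1. y \<notin> Cls (piE e) B i"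
  proof (intro allI impI)
    fix y assume y: "y \<ge> \<bar>h\<bar> + 1"
    have "int e * y \<ge> y" using y assms(1) by (simp add: mult_le_cancel_right1 ) (smt (verit) mult_le_cancel_right1 of_nat_0_less_iff of_nat_1 mult.commute int_one_le_iff_zero_less)
    hence "int e * y + int i \<ge> h" using y by linarith
    thus "y \<notin> Cls (piE e) B i" using h Cls_piE_mem[OF assms(1,2)] by auto
  qed
  show ?thesis unfolding is_betaset_def using lo hi by blast
qed


definition kap :: "nat \<Rightarrow> nat \<Rightarrow> int \<Rightarrow> int" where
  "kap e r b = int r - (b div int e) mod int r"
definition phi :: "nat \<Rightarrow> nat \<Rightarrow> int \<Rightarrow> int" where
  "phi e r b = (b div int e div int r) * int e + b mod int e"
definition piF :: "nat \<Rightarrow> nat \<Rightarrow> int \<Rightarrow> nat \<times> int" where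
  "piF e r b = (nat (kap e r b) - 1, phi e r b)"

lemma mod_decomp: "(N::int) > 0 \<Longrightarrow> 0 \<le> \<rho> \<Longrightarrow> \<rho> < N \<Longrightarrow> (N * q + \<rho>) mod N = \<rho>"
  by (simp add: add.commute)

lemma psi_kap_phi:
  assumes "e > 0" "r > 0" "1 \<le> k" "k \<le> r"
  shows "kap e r (psi e r k a) = int k \<and> phi e r (psi e r k a) = a"
proof -
  define q where "q = a div int e"
  define \<rho> where "\<rho> = a mod int e"
  define M where "M = (q + 1) * int r - int k"
  have \<rho>: "0 \<le> \<rho>" "\<rho> < int e" using assms unfolding \<rho>_def by auto
  have ps: "psi e r k a = int e * M + \<rho>" unfolding psi_def M_def q_def \<rho>_def by (simp add: mult.commute)
  have d1: "psi e r k a div int e = M" unfolding ps by (rule div_decomp) (use assms \<rho> in auto)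
  have m1: "psi e r k a mod int e = \<rho>" unfolding ps by (rule mod_decomp) (use assms \<rho> in auto)
  have M: "M = int r * q + (int r - int k)" unfolding M_def by (simp add: algebra_simps)
  have d2: "M div int r = q" unfolding M by (rule div_decomp) (use assms in auto)
  have m2: "M mod int r = int r - int k" unfolding M by (rule mod_decomp) (use assms in auto)
  have "kap e r (psi e r k a) = int k" unfolding kap_def d1 m2 by simp
  moreover have "phi e r (psi e r k a) = a" unfolding phi_def d1 d2 m1 q_def \<rho>_def by simp
  ultimately show ?thesis by simp
qed

lemma kap_range: assumes "r > 0" shows "1 \<le> kap e r b" "kap e r b \<le> int r"
  unfolding kap_def using assms by (auto simp: int_one_le_iff_zero_less)

lemma psi_surj:
  assumes "e > 0" "r > 0"
  shows "psi e r (nat (kap e r b)) (phi e r b) = b"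
proof -
  define q where "q = b div int e"
  define \<rho> where "\<rho> = b mod int e"
  define u where "u = q div int r"
  define v where "v = q mod int r"
  have \<rho>: "0 \<le> \<rho>" "\<rho> < int e" using assms unfolding \<rho>_def by auto
  have v: "0 \<le> v" "v < int r" using assms unfolding v_def by auto
  have ph: "phi e r b = int e * u + \<rho>" unfolding phi_def u_def q_def \<rho>_def by (simp add: mult.commute)
  have d1: "phi e r b div int e = u" unfolding ph by (rule div_decomp) (use assms \<rho> in auto)
  have m1: "phi e r b mod int e = \<rho>" unfolding ph by (rule mod_decomp) (use assms \<rho> in auto)
  have k0: "kap e r b = int r - v" unfolding kap_def v_def q_def by simp
  have k: "int (nat (kap e r b)) = int r - v" unfolding k0 using v by simp
  have "psi e r (nat (kap e r b)) (phi e r b) = ((u + 1) * int r - (int r - v)) * int e + \<rho>"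
    unfolding psi_def d1 m1 k by simp
  also have "(u + 1) * int r - (int r - v) = q" unfolding u_def v_def
    by (simp add: algebra_simps)
  also have "q * int e + \<rho> = b" unfolding q_def \<rho>_def by (rule div_mult_mod_eq)
  finally show ?thesis .
qed

lemma psi_eq_iff:
  assumes "e > 0" "r > 0" "1 \<le> k" "k \<le> r"
  shows "psi e r k a = b \<longleftrightarrow> kap e r b = int k \<and> phi e r b = a"
proof
  assume "psi e r k a = b" thus "kap e r b = int k \<and> phi e r b = a" using psi_kap_phi[OF assms] by auto
next
  assume "kap e r b = int k \<and> phi e r b = a"
  thus "psi e r k a = b" using psi_surj[OF assms(1,2), of b] by auto
qed

lemma piF_inj: assumes "e > 0" "r > 0" shows "inj (piF e r)"
proof (rule injI)
  fix x y assume "piF e r x = piF e r y"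
  hence a: "nat (kap e r x) - 1 = nat (kap e r y) - 1" "phi e r x = phi e r y" unfolding piF_def by auto
  have "nat (kap e r x) = nat (kap e r y)" using a(1) kap_range[OF assms(2), of e x] kap_range[OF assms(2), of e y] by linarith
  thus "x = y" using a(2) psi_surj[OF assms, of x] psi_surj[OF assms, of y] by metis
qed

lemma piF_fst: "r > 0 \<Longrightarrow> fst (piF e r b) \<in> {..<r}"
  unfolding piF_def using kap_range[of r e b] by auto

lemma Cls_piF_mem:
  assumes "e > 0" "r > 0" "k < r"
  shows "a \<in> Cls (piF e r) B k \<longleftrightarrow> psi e r (k + 1) a \<in> B"
proof
  assume "a \<in> Cls (piF e r) B k"
  then obtain b where b: "b \<in> B" "nat (kap e r b) - 1 = k" "phi e r b = a" unfolding Cls_def piF_def by auto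
  have "kap e r b = int (k + 1)" using b(2) kap_range[OF assms(2), of e b] by linarith
  hence "psi e r (k + 1) a = b" using psi_eq_iff[OF assms(1,2), of "k + 1" a b] b(3) assms by simp
  thus "psi e r (k + 1) a \<in> B" using b(1) by simp
next
  assume a: "psi e r (k + 1) a \<in> B"
  have "kap e r (psi e r (k + 1) a) = int (k + 1) \<and> phi e r (psi e r (k + 1) a) = a"
    by (rule psi_kap_phi) (use assms in auto)
  hence "piF e r (psi e r (k + 1) a) = (k, a)" unfolding piF_def by simp
  thus "a \<in> Cls (piF e r) B k" unfolding Cls_def using a by blast
qed

lemma psi_bounds:
  assumes "e > 0" "r > 0" "1 \<le> k" "k \<le> r"
  shows "(a div int e) * int r * int e \<le> psi e r k a" "psi e r k a \<le> (a div int e + 1) * int r * int e - 1"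
proof -
  have \<rho>: "0 \<le> a mod int e" "a mod int e < int e" using assms by auto
  have "(a div int e) * int r \<le> (a div int e + 1) * int r - int k" using assms by (simp add: algebra_simps)
  hence "(a div int e) * int r * int e \<le> ((a div int e + 1) * int r - int k) * int e"
    using assms by (intro mult_right_mono) auto
  thus "(a div int e) * int r * int e \<le> psi e r k a" unfolding psi_def using \<rho> by linarith
  have "((a div int e + 1) * int r - int k) * int e \<le> ((a div int e + 1) * int r - 1) * int e"
    using assms by (intro mult_right_mono) auto
  moreover have ek: "int e \<le> int e * int k" using assms by simp
  ultimately show "psi e r k a \<le> (a div int e + 1) * int r * int e - 1" unfolding psi_def using \<rho>
    by (simp add: algebra_simps) (use ek \<rho> in linarith)
qed


lemma div_mult_le: "(d::int) > 0 \<Longrightarrow> L div d * d \<le> L"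
proof -
  assume "d > 0"
  hence "0 \<le> L mod d" by simp
  moreover have "L div d * d = L - L mod d" by (simp add: minus_mod_eq_div_mult)
  ultimately show ?thesis by linarith
qed

lemma Cls_piF_betaset:
  assumes "e > 0" "r > 0" "k < r" "is_betaset B"
  shows "is_betaset (Cls (piF e r) B k)"
proof -
  obtain L where L: "\<forall>x\<le>L. x \<in> B" using assms(4) unfolding is_betaset_def by blast
  obtain H where H: "\<forall>x\<ge>H. x \<notin> B" using assms(4) unfolding is_betaset_def by blast
  have k1: "1 \<le> k + 1" "k + 1 \<le> r" using assms by auto
  define A where "A = int e * (L div (int r * int e) - 1)"
  have lo: "\<forall>a\<le>A. a \<in> Cls (piF e r) B k"
  proof (intro allI impI)
    fix a assume a: "a \<le> A"
    have "a div int e \<le> A div int e" using a assms by (simp add: zdiv_mono1)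
    also have "A div int e = L div (int r * int e) - 1" unfolding A_def using assms by simp
    finally have "a div int e + 1 \<le> L div (int r * int e)" by simp
    hence "(a div int e + 1) * (int r * int e) \<le> L div (int r * int e) * (int r * int e)"
      using assms by (intro mult_right_mono) auto
    also have "\<dots> \<le> L" by (rule div_mult_le) (use assms in simp)
    finally have "psi e r (k + 1) a \<le> L" using psi_bounds(2)[OF assms(1,2) k1, of a] by (simp add: mult.assoc)
    thus "a \<in> Cls (piF e r) B k" using L Cls_piF_mem[OF assms(1-3)] by auto
  qed
  define A' where "A' = int e * (\<bar>H\<bar> + 1)"
  have hi: "\<forall>a\<ge>A'. a \<notin> Cls (piF e r) B k"
  proof (intro allI impI)
    fix a assume a: "a \<ge> A'"
    have "A' div int e \<le> a div int e" using a assms by (simp add: zdiv_mono1)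
    also have "A' div int e = \<bar>H\<bar> + 1" unfolding A'_def using assms by simp
    finally have q: "\<bar>H\<bar> + 1 \<le> a div int e" .
    have re: "1 \<le> int r * int e" using assms(1,2) by (metis int_one_le_iff_zero_less mult_pos_pos of_nat_0_less_iff)
    have "(\<bar>H\<bar> + 1) * 1 \<le> (a div int e) * (int r * int e)"
      using q re by (intro mult_mono) auto
    hence "H \<le> psi e r (k + 1) a" using psi_bounds(1)[OF assms(1,2) k1, of a] by (simp add: mult.assoc)
    thus "a \<notin> Cls (piF e r) B k" using H Cls_piF_mem[OF assms(1-3)] by auto
  qed
  show ?thesis unfolding is_betaset_def using lo hi by blast
qed

lemma union_mem:
  assumes "e > 0" "r > 0"
  shows "x \<in> (\<Union>k\<in>{1..r}. psi e r k ` Bs k) \<longleftrightarrow> phi e r x \<in> Bs (nat (kap e r x))"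
proof
  assume "x \<in> (\<Union>k\<in>{1..r}. psi e r k ` Bs k)"
  then obtain k a where k: "k \<in> {1..r}" "a \<in> Bs k" "x = psi e r k a" by auto
  hence "kap e r x = int k \<and> phi e r x = a" using psi_kap_phi[OF assms, of k a] by auto
  thus "phi e r x \<in> Bs (nat (kap e r x))" using k by simp
next
  assume a: "phi e r x \<in> Bs (nat (kap e r x))"
  have "nat (kap e r x) \<in> {1..r}" using kap_range[OF assms(2), of e x] by auto
  moreover have "x = psi e r (nat (kap e r x)) (phi e r x)" using psi_surj[OF assms] by simp
  ultimately show "x \<in> (\<Union>k\<in>{1..r}. psi e r k ` Bs k)" using a by blast
qed

lemma union_betaset:
  assumes "e > 0" "r > 0" "\<forall>k\<in>{1..r}. is_betaset (Bs k)"
  shows "is_betaset (\<Union>k\<in>{1..r}. psi e r k ` Bs k)"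
proof -
  have "\<forall>k\<in>{1..r}. \<exists>a. \<forall>x\<le>a. x \<in> Bs k" using assms(3) unfolding is_betaset_def by blast
  then obtain f where f: "\<forall>k\<in>{1..r}. \<forall>x\<le>f k. x \<in> Bs k" by metis
  have "\<forall>k\<in>{1..r}. \<exists>a. \<forall>x\<ge>a. x \<notin> Bs k" using assms(3) unfolding is_betaset_def by blast
  then obtain g where g: "\<forall>k\<in>{1..r}. \<forall>x\<ge>g k. x \<notin> Bs k" by metis
  define L where "L = Min (f ` {1..r})"
  define H where "H = Max (g ` {1..r})"
  have Lk: "L \<le> f k" if "k \<in> {1..r}" for k unfolding L_def using that by simp
  have Hk: "g k \<le> H" if "k \<in> {1..r}" for k unfolding H_def using that by simp
  have kr: "nat (kap e r x) \<in> {1..r}" for x using kap_range[OF assms(2), of e x] by auto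
  define A where "A = int e * (int r * (L div int e - 1))"
  have lo: "\<forall>x\<le>A. x \<in> (\<Union>k\<in>{1..r}. psi e r k ` Bs k)"
  proof (intro allI impI)
    fix x assume x: "x \<le> A"
    have "x div int e div int r \<le> A div int e div int r" using x assms by (simp add: zdiv_mono1)
    also have "A div int e div int r = L div int e - 1" unfolding A_def using assms by simp
    finally have "x div int e div int r * int e \<le> (L div int e - 1) * int e" using assms by (intro mult_right_mono) auto
    moreover have "x mod int e < int e" using assms by simp
    moreover have "L div int e * int e \<le> L" by (rule div_mult_le) (use assms in simp)
    ultimately have "phi e r x \<le> L" unfolding phi_def by (simp add: algebra_simps)
    hence "phi e r x \<in> Bs (nat (kap e r x))" using f Lk[OF kr[of x]] kr[of x] by auto
    thus "x \<in> (\<Union>k\<in>{1..r}. psi e r k ` Bs k)" using union_mem[OF assms(1,2)] by blast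
  qed
  define A' where "A' = int e * (int r * (\<bar>H\<bar> + 1))"
  have hi: "\<forall>x\<ge>A'. x \<notin> (\<Union>k\<in>{1..r}. psi e r k ` Bs k)"
  proof (intro allI impI)
    fix x assume x: "x \<ge> A'"
    have "A' div int e div int r \<le> x div int e div int r" using x assms by (simp add: zdiv_mono1)
    also have "A' div int e div int r = \<bar>H\<bar> + 1" unfolding A'_def using assms by simp
    finally have q: "\<bar>H\<bar> + 1 \<le> x div int e div int r" .
    have "x div int e div int r * 1 \<le> x div int e div int r * int e"
      by (rule mult_left_mono) (use q assms in auto)
    hence "\<bar>H\<bar> + 1 \<le> x div int e div int r * int e" using q by simp
    moreover have "0 \<le> x mod int e" using assms by simp
    moreover have "H \<le> \<bar>H\<bar>" by simp
    ultimately have "phi e r x \<ge> H" unfolding phi_def by linarith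
    hence "phi e r x \<notin> Bs (nat (kap e r x))" using g Hk[OF kr[of x]] kr[of x] by auto
    thus "x \<notin> (\<Union>k\<in>{1..r}. psi e r k ` Bs k)" using union_mem[OF assms(1,2)] by blast
  qed
  show ?thesis unfolding is_betaset_def using lo hi by blast
qed

lemma Phi_props:
  assumes "e > 0" "r > 0" "is_partition l"
  shows "\<forall>k<r. is_partition (fst (Phi e r (l, s)) k) \<and>
           beta (snd (Phi e r (l, s)) k) (fst (Phi e r (l, s)) k) = Cls (piF e r) (beta s l) k"
proof -
  define B where "B = beta s l"
  have Bb: "is_betaset B" unfolding B_def by (rule beta_betaset[OF assms(3)])
  define X0 :: multiconf where "X0 = (\<lambda>k. if k < r then fst (decode (Cls (piF e r) B k)) else (\<lambda>_. 0),
                      \<lambda>k. if k < r then snd (decode (Cls (piF e r) B k)) else 0)"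
  have X0k: "is_partition (fst X0 k) \<and> beta (snd X0 k) (fst X0 k) = Cls (piF e r) B k" if "k < r" for k
    using decode_props[OF Cls_piF_betaset[OF assms(1,2) that Bb]] that unfolding X0_def by simp
  have Pdef: "\<And>X. (\<forall>k<r. is_partition (fst X k)) \<and> (\<forall>k\<ge>r. fst X k = (\<lambda>_. 0) \<and> snd X k = 0) \<and> Psi e r X = (l, s)
      \<Longrightarrow> X = X0"
  proof -
    fix X :: multiconf
    assume a: "(\<forall>k<r. is_partition (fst X k)) \<and> (\<forall>k\<ge>r. fst X k = (\<lambda>_. 0) \<and> snd X k = 0) \<and> Psi e r X = (l, s)"
    define U where "U = (\<Union>k\<in>{1..r}. psi e r k ` beta (snd X (k - 1)) (fst X (k - 1)))"
    have Ub: "is_betaset U" unfolding U_def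
      by (rule union_betaset[OF assms(1,2)]) (use a in \<open>auto intro!: beta_betaset\<close>)
    have "decode U = (l, s)" using a unfolding Psi_def U_def by simp
    hence UB: "U = B" using decode_props[OF Ub] unfolding B_def by simp
    have comp: "beta (snd X k) (fst X k) = Cls (piF e r) B k" if k: "k < r" for k
    proof (rule set_eqI)
      fix a
      have "a \<in> Cls (piF e r) B k \<longleftrightarrow> psi e r (k + 1) a \<in> U" using Cls_piF_mem[OF assms(1,2) k] UB by simp
      also have "\<dots> \<longleftrightarrow> phi e r (psi e r (k + 1) a) \<in> beta (snd X (nat (kap e r (psi e r (k + 1) a)) - 1)) (fst X (nat (kap e r (psi e r (k + 1) a)) - 1))"
        unfolding U_def by (rule union_mem[OF assms(1,2)])
      also have "\<dots> \<longleftrightarrow> a \<in> beta (snd X k) (fst X k)"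
      proof -
        have h1: "kap e r (psi e r (k + 1) a) = int (k + 1)" and h2: "phi e r (psi e r (k + 1) a) = a"
          using psi_kap_phi[OF assms(1,2), of "k + 1" a] k by auto
        have "nat (kap e r (psi e r (k + 1) a)) - 1 = k" by (simp only: h1 nat_int)
        thus ?thesis using h2 by simp
      qed
      finally show "a \<in> beta (snd X k) (fst X k) \<longleftrightarrow> a \<in> Cls (piF e r) B k" by simp
    qed
    have "fst X k = fst X0 k \<and> snd X k = snd X0 k" for k
    proof (cases "k < r")
      case True
      have "decode (beta (snd X k) (fst X k)) = (fst X k, snd X k)" using a True by (simp add: decode_beta)
      thus ?thesis using comp[OF True] True unfolding X0_def by simp
    next
      case False thus ?thesis using a unfolding X0_def by simp
    qed
    thus "X = X0" by (simp add: prod_eq_iff fun_eq_iff)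
  qed
  have X0ok: "(\<forall>k<r. is_partition (fst X0 k)) \<and> (\<forall>k\<ge>r. fst X0 k = (\<lambda>_. 0) \<and> snd X0 k = 0) \<and> Psi e r X0 = (l, s)"
  proof (intro conjI)
    show "\<forall>k<r. is_partition (fst X0 k)" using X0k by blast
    show "\<forall>k\<ge>r. fst X0 k = (\<lambda>_. 0) \<and> snd X0 k = 0" unfolding X0_def by simp
    have "(\<Union>k\<in>{1..r}. psi e r k ` beta (snd X0 (k - 1)) (fst X0 (k - 1))) = (\<Union>k\<in>{1..r}. psi e r k ` Cls (piF e r) B (k - 1))"
      using X0k by (intro SUP_cong) auto
    also have "\<dots> = B"
    proof (rule set_eqI)
      fix x
      have "x \<in> (\<Union>k\<in>{1..r}. psi e r k ` Cls (piF e r) B (k - 1)) \<longleftrightarrow> phi e r x \<in> Cls (piF e r) B (nat (kap e r x) - 1)"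
        by (rule union_mem[OF assms(1,2)])
      also have "\<dots> \<longleftrightarrow> psi e r (nat (kap e r x) - 1 + 1) (phi e r x) \<in> B"
        by (rule Cls_piF_mem[OF assms(1,2)]) (use kap_range[OF assms(2), of e x] in linarith)
      also have "nat (kap e r x) - 1 + 1 = nat (kap e r x)" using kap_range[OF assms(2), of e x] by linarith
      also have "psi e r (nat (kap e r x)) (phi e r x) = x" by (rule psi_surj[OF assms(1,2)])
      finally show "x \<in> (\<Union>k\<in>{1..r}. psi e r k ` Cls (piF e r) B (k - 1)) \<longleftrightarrow> x \<in> B" .
    qed
    finally show "Psi e r X0 = (l, s)" unfolding Psi_def B_def using decode_beta[OF assms(3)] by simp
  qed
  have "Phi e r (l, s) = X0" unfolding Phi_def by (rule the_equality) (use X0ok Pdef in blast)+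
  thus ?thesis using X0k unfolding B_def by simp
qed


lemma Dl_shift:
  "Dl f ((\<lambda>x. x + c) ` A) ((\<lambda>x. x + c) ` A') = Dl (\<lambda>x. f (x + (c::int))) A A'"
proof -
  have inj: "inj (\<lambda>x::int. x + c)" by (rule injI) simp
  have "(\<lambda>x. x + c) ` A - (\<lambda>x. x + c) ` A' = (\<lambda>x. x + c) ` (A - A')" for A A' :: "int set"
    by (rule image_set_diff[OF inj, symmetric])
  thus ?thesis unfolding Dl_def by (simp add: sum.reindex inj_on_subset[OF inj])
qed

lemma beta_shift: "beta s' l = (\<lambda>x. x + (s' - s)) ` beta s l"
  unfolding beta_range bseq_def by (auto simp: image_image algebra_simps)

lemma Dl_cong: "(\<And>x. f x = g x) \<Longrightarrow> Dl f A A' = Dl g A A'"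
  by (metis ext)

lemma F1:
  assumes "e > 0" "i < e"
  shows "(if nat (b mod int e) = i then 1 else 0) = (b - int i) div int e - (b - int (i + 1)) div int e"
proof -
  have "nat (b mod int e) = i \<longleftrightarrow> b mod int e = int i" using assms by auto
  thus ?thesis using ind_div[of "int e" "int i" b] assms by (simp add: algebra_simps)
qed

lemma F2:
  assumes "r > 0" "k < r"
  shows "(if nat (kap e r b) - 1 = k then 1 else 0) = (if (b div int e) mod int r = int (r - 1 - k) then 1 else (0::int))"
proof -
  define v where "v = (b div int e) mod int r"
  have v: "0 \<le> v" "v < int r" using assms unfolding v_def by auto
  have kv: "kap e r b = int r - v" unfolding kap_def v_def by simp
  have "nat (kap e r b) - 1 = k \<longleftrightarrow> nat (int r - v) = k + 1" unfolding kv using v by auto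
  also have "\<dots> \<longleftrightarrow> int r - v = int (k + 1)" using v by (simp add: nat_eq_iff)
  also have "\<dots> \<longleftrightarrow> v = int (r - 1 - k)" using assms by auto
  finally show ?thesis unfolding v_def by simp
qed

lemma F3:
  assumes "r > 0" "n < r"
  shows "(if (q::int) mod int r = int n then 1 else 0) = (q - int n) div int r - (q - int (n + 1)) div int r"
  using ind_div[of "int r" "int n" q] assms by (simp add: algebra_simps)

lemma F4: "phi e r b = int e * (b div int e div int r) + b - int e * (b div int e)"
  unfolding phi_def by (simp add: minus_mult_div_eq_mod[symmetric] algebra_simps)

lemma F5:
  assumes "e > 0"
  shows "(phi e r b - j) div int e = b div int e div int r + (b - j) div int e - b div int e"
proof -
  have eq1: "phi e r b - j = (b mod int e - j) + (b div int e div int r) * int e" unfolding phi_def by simp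
  have "(phi e r b - j) div int e = ((b mod int e - j) + (b div int e div int r) * int e) div int e" by (simp only: eq1)
  also have "\<dots> = b div int e div int r + (b mod int e - j) div int e" by (rule div_mult_self1) (use assms in simp)
  finally have 1: "(phi e r b - j) div int e = b div int e div int r + (b mod int e - j) div int e" .
  have eq2: "b - j = (b mod int e - j) + (b div int e) * int e" by (simp add: algebra_simps minus_mod_eq_div_mult[symmetric])
  have "(b - j) div int e = ((b mod int e - j) + (b div int e) * int e) div int e" by (simp only: eq2)
  also have "\<dots> = b div int e + (b mod int e - j) div int e" by (rule div_mult_self1) (use assms in simp)
  finally have 2: "(b - j) div int e = b div int e + (b mod int e - j) div int e" .
  show ?thesis using 1 2 by simp
qed


lemma LA:
  fixes B B' :: "int set" and e r :: nat
  assumes e: "e > 0" and r: "r > 0"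
    and D1: "Dl (\<lambda>_. 1) B B' = 0"
    and Did: "Dl (\<lambda>x. x) B B' = 0"
    and HJ: "\<forall>j. Dl (\<lambda>x. (x - j) div int e) B B' = 0"
  shows "(\<forall>j. Dl (\<lambda>b. (b div int e - j) div int r) B B' = 0) \<longleftrightarrow>
   (\<forall>k<r. Dl (\<lambda>b. if nat (kap e r b) - 1 = k then 1 else 0) B B' = 0) \<and> Dl (phi e r) B B' = 0
      \<and> (\<forall>j. Dl (\<lambda>b. (phi e r b - j) div int e) B B' = 0)"
proof -
  define G where "G j = Dl (\<lambda>b. (b div int e - j) div int r) B B'" for j
  define Ik where "Ik n = Dl (\<lambda>b. if (b div int e) mod int r = int n then 1 else 0) B B'" for n
  have IkG: "Ik n = G (int n) - G (int (n + 1))" if "n < r" for n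
  proof -
    have "Ik n = Dl (\<lambda>b. (b div int e - int n) div int r - (b div int e - int (n + 1)) div int r) B B'"
      unfolding Ik_def by (rule Dl_cong) (rule F3[OF r that])
    thus ?thesis unfolding G_def by (simp only: Dl_diff)
  qed
  have Dq: "Dl (\<lambda>b. b div int e) B B' = 0" using HJ[rule_format, of 0] by simp
  have G0: "G 0 = Dl (\<lambda>b. b div int e div int r) B B'" unfolding G_def by simp
  have P1: "Dl (\<lambda>b. (phi e r b - j) div int e) B B' = G 0" for j
  proof -
    have "Dl (\<lambda>b. (phi e r b - j) div int e) B B' = Dl (\<lambda>b. b div int e div int r + (b - j) div int e - b div int e) B B'"
      by (rule Dl_cong) (rule F5[OF e])
    also have "\<dots> = Dl (\<lambda>b. b div int e div int r) B B' + Dl (\<lambda>b. (b - j) div int e) B B' - Dl (\<lambda>b. b div int e) B B'"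
      by (simp only: Dl_diff Dl_add)
    finally show ?thesis using HJ Dq G0 by simp
  qed
  have P2: "Dl (phi e r) B B' = int e * G 0"
  proof -
    have "Dl (phi e r) B B' = Dl (\<lambda>b. int e * (b div int e div int r) + b - int e * (b div int e)) B B'"
      by (rule Dl_cong) (rule F4)
    also have "\<dots> = int e * Dl (\<lambda>b. b div int e div int r) B B' + Dl (\<lambda>b. b) B B' - int e * Dl (\<lambda>b. b div int e) B B'"
      by (simp only: Dl_diff Dl_add Dl_cmult)
    finally show ?thesis using Did Dq G0 by simp
  qed
  have P3: "Dl (\<lambda>b. if nat (kap e r b) - 1 = k then 1 else 0) B B' = Ik (r - 1 - k)" if "k < r" for k
    unfolding Ik_def by (rule Dl_cong) (rule F2[OF r that])
  have Gshift: "G j = G (j mod int r)" for j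
  proof -
    have "G j = Dl (\<lambda>b. (b div int e - j mod int r) div int r - j div int r) B B'"
      unfolding G_def by (rule Dl_cong) (rule div_shift, use r in simp)
    also have "\<dots> = Dl (\<lambda>b. (b div int e - j mod int r) div int r) B B' - (j div int r) * Dl (\<lambda>_. 1) B B'"
      by (simp only: Dl_diff Dl_const[of "j div int r"])
    also have "\<dots> = G (j mod int r)" by (simp only: D1 G_def mult_zero_right diff_zero)
    finally show ?thesis .
  qed
  show ?thesis
  proof
    assume A: "\<forall>j. Dl (\<lambda>b. (b div int e - j) div int r) B B' = 0"
    hence Gz: "G j = 0" for j unfolding G_def by blast
    have "\<forall>k<r. Dl (\<lambda>b. if nat (kap e r b) - 1 = k then 1 else 0) B B' = 0"
    proof (intro allI impI)
      fix k assume k: "k < r"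
      have "r - 1 - k < r" using k by simp
      hence "Ik (r - 1 - k) = 0" using IkG Gz by simp
      thus "Dl (\<lambda>b. if nat (kap e r b) - 1 = k then 1 else 0) B B' = 0" using P3[OF k] by simp
    qed
    thus "(\<forall>k<r. Dl (\<lambda>b. if nat (kap e r b) - 1 = k then 1 else 0) B B' = 0) \<and> Dl (phi e r) B B' = 0
      \<and> (\<forall>j. Dl (\<lambda>b. (phi e r b - j) div int e) B B' = 0)" using P1 P2 Gz by simp
  next
    assume A: "(\<forall>k<r. Dl (\<lambda>b. if nat (kap e r b) - 1 = k then 1 else 0) B B' = 0) \<and> Dl (phi e r) B B' = 0
      \<and> (\<forall>j. Dl (\<lambda>b. (phi e r b - j) div int e) B B' = 0)"
    have Ikz: "Ik n = 0" if "n < r" for n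
    proof -
      have "r - 1 - (r - 1 - n) = n" using that by simp
      moreover have "r - 1 - n < r" using that by simp
      ultimately show ?thesis using A P3[of "r - 1 - n"] by metis
    qed
    have Gz0: "G 0 = 0" using A P1 by metis
    have Gn: "n < r \<longrightarrow> G (int n) = 0" for n
    proof (induction n)
      case 0 thus ?case using Gz0 by simp
    next
      case (Suc n) thus ?case using IkG[of n] Ikz[of n] by simp
    qed
    have "G j = 0" for j
    proof -
      have "j mod int r = int (nat (j mod int r))" "nat (j mod int r) < r" using r by (simp_all add: nat_less_iff)
      thus ?thesis using Gshift[of j] Gn[of "nat (j mod int r)"] by simp
    qed
    thus "\<forall>j. Dl (\<lambda>b. (b div int e - j) div int r) B B' = 0" unfolding G_def by blast
  qed
qed


theorem theorem2p13:
  fixes e r :: nat and l m :: "nat \<Rightarrow> nat" and s :: int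
  assumes "e \<ge> 2" and "r \<ge> 2"
    and "is_partition l" and "is_partition m"
    and "sim_e e l m"
  shows "block_eq r e (eta e (l, s)) (eta e (m, s)) \<longleftrightarrow> block_eq e r (Phi e r (l, s)) (Phi e r (m, s))"
proof -
  have e0: "e > 0" and r0: "r > 0" using assms(1,2) by auto
  define B where "B = beta s l"
  define B' where "B' = beta s m"
  have fin: "finite (B - B')" "finite (B' - B)" unfolding B_def B'_def
    using beta_diff_finite assms(3,4) by auto
  have D1: "Dl (\<lambda>_. 1) B B' = 0" unfolding B_def B'_def using Dl_charge[OF assms(3,4)] by simp
  obtain s' where bl: "block_eq e 1 (\<lambda>_. l, \<lambda>_. s') (\<lambda>_. m, \<lambda>_. s')"
    using assms(5) unfolding sim_e_def by blast
  have blx: "Dl (\<lambda>x. x) (beta s' l) (beta s' m) = 0 \<and> (\<forall>j. Dl (\<lambda>x. (x - j) div int e) (beta s' l) (beta s' m) = 0)"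
    using block_iff[of e 1 "(\<lambda>_. l, \<lambda>_. s')" "(\<lambda>_. m, \<lambda>_. s')"] bl e0 assms(3,4) by simp
  define c where "c = s' - s"
  have sh: "beta s' l = (\<lambda>x. x + c) ` B" "beta s' m = (\<lambda>x. x + c) ` B'"
    unfolding B_def B'_def c_def by (rule beta_shift)+
  have Did: "Dl (\<lambda>x. x) B B' = 0"
  proof -
    have "Dl (\<lambda>x. x + c) B B' = 0" using blx unfolding sh Dl_shift by simp
    thus ?thesis by (simp only: Dl_add Dl_const[of c] D1)
  qed
  have HJ: "\<forall>j. Dl (\<lambda>x. (x - j) div int e) B B' = 0"
  proof
    fix j
    have "\<forall>j. Dl (\<lambda>x. (x + c - j) div int e) B B' = 0" using blx unfolding sh Dl_shift by simp
    hence "Dl (\<lambda>x. (x + c - (j + c)) div int e) B B' = 0" by blast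
    thus "Dl (\<lambda>x. (x - j) div int e) B B' = 0" by simp
  qed
  define El where "El = eta e (l, s)"
  define Em where "Em = eta e (m, s)"
  have Ecomp: "is_partition (fst El i) \<and> beta (snd El i) (fst El i) = Cls (piE e) B i"
     "is_partition (fst Em i) \<and> beta (snd Em i) (fst Em i) = Cls (piE e) B' i" if i: "i < e" for i
  proof -
    have bb: "is_betaset B" "is_betaset B'" unfolding B_def B'_def using beta_betaset assms(3,4) by auto
    show "is_partition (fst El i) \<and> beta (snd El i) (fst El i) = Cls (piE e) B i"
      using decode_props[OF Cls_piE_betaset[OF e0 i bb(1)]] i unfolding El_def eta_def B_def
      by (simp add: eta_C_Cls[OF e0 i])
    show "is_partition (fst Em i) \<and> beta (snd Em i) (fst Em i) = Cls (piE e) B' i"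
      using decode_props[OF Cls_piE_betaset[OF e0 i bb(2)]] i unfolding Em_def eta_def B'_def
      by (simp add: eta_C_Cls[OF e0 i])
  qed
  have Esum: "(\<Sum>i<e. Dl G (beta (snd El i) (fst El i)) (beta (snd Em i) (fst Em i))) = Dl (\<lambda>b. G (b div int e)) B B'" for G
  proof -
    have "(\<Sum>i<e. Dl G (beta (snd El i) (fst El i)) (beta (snd Em i) (fst Em i))) = (\<Sum>i\<in>{..<e}. Dl G (Cls (piE e) B i) (Cls (piE e) B' i))"
      by (rule sum.cong) (use Ecomp in auto)
    also have "\<dots> = Dl (\<lambda>b. G (snd (piE e b))) B B'"
      by (rule RE_sum[OF piE_inj[OF e0] fin]) (use piE_fst[OF e0] in auto)
    finally show ?thesis by (simp add: piE_def)
  qed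
  have Ech: "snd El i = snd Em i" if i: "i < e" for i
  proof -
    have "snd El i - snd Em i = Dl (\<lambda>_. 1) (beta (snd El i) (fst El i)) (beta (snd Em i) (fst Em i))"
      using Dl_charge[of "fst El i" "fst Em i" "snd El i" "snd Em i"] Ecomp[OF i] by simp
    also have "\<dots> = Dl (\<lambda>_. 1) (Cls (piE e) B i) (Cls (piE e) B' i)" using Ecomp[OF i] by simp
    also have "\<dots> = Dl (\<lambda>b. if fst (piE e b) = i then 1 else 0) B B'" by (simp add: RE[OF piE_inj[OF e0] fin])
    also have "\<dots> = Dl (\<lambda>b. (b - int i) div int e - (b - int (i + 1)) div int e) B B'"
      by (rule Dl_cong) (simp add: piE_def F1[OF e0 i])
    also have "\<dots> = 0" using HJ by (simp only: Dl_diff)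
    finally show ?thesis by simp
  qed
  have Eiff: "block_eq r e El Em \<longleftrightarrow> (\<forall>j. Dl (\<lambda>b. (b div int e - j) div int r) B B' = 0)"
  proof -
    have "block_eq r e El Em \<longleftrightarrow> (\<forall>k<e. snd El k = snd Em k)
     \<and> (\<Sum>k<e. Dl (\<lambda>x. x) (beta (snd El k) (fst El k)) (beta (snd Em k) (fst Em k))) = 0
     \<and> (\<forall>j. (\<Sum>k<e. Dl (\<lambda>x. (x - j) div int r) (beta (snd El k) (fst El k)) (beta (snd Em k) (fst Em k))) = 0)"
      by (rule block_iff) (use r0 Ecomp in auto)
    also have "\<dots> \<longleftrightarrow> (\<forall>j. Dl (\<lambda>b. (b div int e - j) div int r) B B' = 0)"
      by (simp only: Esum) (use Ech HJ[rule_format, of 0] in simp)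
    finally show ?thesis .
  qed
  define Fl where "Fl = Phi e r (l, s)"
  define Fm where "Fm = Phi e r (m, s)"
  have Fcomp: "is_partition (fst Fl k) \<and> beta (snd Fl k) (fst Fl k) = Cls (piF e r) B k"
     "is_partition (fst Fm k) \<and> beta (snd Fm k) (fst Fm k) = Cls (piF e r) B' k" if k: "k < r" for k
    using Phi_props[OF e0 r0 assms(3), of s] Phi_props[OF e0 r0 assms(4), of s] k
    unfolding Fl_def Fm_def B_def B'_def by auto
  have Fsum: "(\<Sum>k<r. Dl G (beta (snd Fl k) (fst Fl k)) (beta (snd Fm k) (fst Fm k))) = Dl (\<lambda>b. G (phi e r b)) B B'" for G
  proof -
    have "(\<Sum>k<r. Dl G (beta (snd Fl k) (fst Fl k)) (beta (snd Fm k) (fst Fm k))) = (\<Sum>k\<in>{..<r}. Dl G (Cls (piF e r) B k) (Cls (piF e r) B' k))"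
      by (rule sum.cong) (use Fcomp in auto)
    also have "\<dots> = Dl (\<lambda>b. G (snd (piF e r b))) B B'"
      by (rule RE_sum[OF piF_inj[OF e0 r0] fin]) (use piF_fst[OF r0] in auto)
    finally show ?thesis by (simp add: piF_def)
  qed
  have Fch: "snd Fl k = snd Fm k \<longleftrightarrow> Dl (\<lambda>b. if nat (kap e r b) - 1 = k then 1 else 0) B B' = 0" if k: "k < r" for k
  proof -
    have "snd Fl k - snd Fm k = Dl (\<lambda>_. 1) (beta (snd Fl k) (fst Fl k)) (beta (snd Fm k) (fst Fm k))"
      using Dl_charge[of "fst Fl k" "fst Fm k" "snd Fl k" "snd Fm k"] Fcomp[OF k] by simp
    also have "\<dots> = Dl (\<lambda>_. 1) (Cls (piF e r) B k) (Cls (piF e r) B' k)" using Fcomp[OF k] by simp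
    also have "\<dots> = Dl (\<lambda>b. if fst (piF e r b) = k then 1 else 0) B B'" by (simp add: RE[OF piF_inj[OF e0 r0] fin])
    also have "\<dots> = Dl (\<lambda>b. if nat (kap e r b) - 1 = k then 1 else 0) B B'" by (simp add: piF_def)
    finally show ?thesis by linarith
  qed
  have Fiff: "block_eq e r Fl Fm \<longleftrightarrow> (\<forall>k<r. Dl (\<lambda>b. if nat (kap e r b) - 1 = k then 1 else 0) B B' = 0) \<and> Dl (phi e r) B B' = 0
      \<and> (\<forall>j. Dl (\<lambda>b. (phi e r b - j) div int e) B B' = 0)"
  proof -
    have "block_eq e r Fl Fm \<longleftrightarrow> (\<forall>k<r. snd Fl k = snd Fm k)
     \<and> (\<Sum>k<r. Dl (\<lambda>x. x) (beta (snd Fl k) (fst Fl k)) (beta (snd Fm k) (fst Fm k))) = 0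
     \<and> (\<forall>j. (\<Sum>k<r. Dl (\<lambda>x. (x - j) div int e) (beta (snd Fl k) (fst Fl k)) (beta (snd Fm k) (fst Fm k))) = 0)"
      by (rule block_iff) (use e0 Fcomp in auto)
    also have "\<dots> \<longleftrightarrow> (\<forall>k<r. Dl (\<lambda>b. if nat (kap e r b) - 1 = k then 1 else 0) B B' = 0) \<and> Dl (phi e r) B B' = 0
      \<and> (\<forall>j. Dl (\<lambda>b. (phi e r b - j) div int e) B B' = 0)"
      by (simp only: Fsum) (use Fch in simp)
    finally show ?thesis .
  qed
  show ?thesis
    using LA[OF e0 r0 D1 Did HJ] Eiff Fiff unfolding El_def Em_def Fl_def Fm_def by simp
qed

end
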